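(* Suppose that $N_i$ is a single-point process and Assumptions (1) stable unit treatment value, (2) exclusion restriction, (3) randomization, and (4) no anticipation hold. For any $t \in [0,T]$, we have \begin{eqnarray*} \mathrm{ACE}_Y(t) &=& \int_{0}^T E \{ \partial Y_{i\tau}(t)/ \partial \tau \mid \mathcal{T}_{i0} \leq \tau < \mathcal{T}_{i1} \} \Pr (\mathcal{T}_{i0} \leq \tau < \mathcal{T}_{i1} )\mathrm{d} \tau\\ &&- \int_{0}^T E \{ \partial Y_{i\tau}(t)/\partial \tau \mid \mathcal{T}_{i1} \leq \tau < \mathcal{T}_{i0} \} \Pr (\mathcal{T}_{i1} \leq \tau < \mathcal{T}_{i0} )\mathrm{d} \tau. \end{eqnarray*} If the monotonicity assumption ($\mathcal{T}_{i1} \leq \mathcal{T}_{i0}$ for each $i$) holds in addition, then for any $t \in [0,T]$, we have \begin{eqnarray*} \mathrm{ACE}_Y(t) &=& - \int_{0}^T E \{ \partial Y_{i\tau}(t)/\partial \tau \mid \mathcal{T}_{i1} \leq \tau < \mathcal{T}_{i0} \}\cdot \mathrm{ACE}_N(\tau) \mathrm{d} \tau. \end{eqnarray*}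
   Context: Units $i=1,\ldots,m$ are i.i.d.; $Z_i\in\{0,1\}$ is a binary instrumental variable onsetting at time $0$; the treatment $N_i(\cdot)$ and outcome $Y_i(\cdot)$ are simple point processes with bounded intensity observed on $[0,T]$, with $N_i(t)$ denoting $N_i([0,t])$. $N_i$ is a single-point process if $N_i(T)\leq 1$; its event time is $\mathcal{T}_i=\tau$ if $N_i(t)=1$ for $t\geq\tau$ and $N_i(t)=0$ for $t<\tau$, and $\mathcal{T}_i=T^+$ if $N_i(T)=0$. $N_{iz}(\cdot)$, $\mathcal{T}_{iz}$, $Y_{iz}(\cdot)$ are potential treatment process, event time and outcome process under $Z_i=z$; $Y_{iz\tau}(\cdot)$ is the potential outcome process under $Z_i=z$ and event time $\mathcal{T}_i=\tau$, with $Y_{iz}=Y_{iz,\mathcal{T}_{iz}}$. Assumptions: (1) no interference between units and no different versions of instrument and treatment process; (2) exclusion restriction: $Y_{iz'\tau}=Y_{iz\tau}$ for all $z,z'$, so write $Y_{i\tau}$; (3) randomization: $Z_i$ is independent of $\{N_{iz}(\cdot), Y_{i\tau}(\cdot): z\in\{0,1\}, \tau\in[0,T]\cup T^+\}$; (4) no anticipation: $Y_{i\tau}(t)=Y_{i\tau'}(t)$ for $\tau,\tau'\geq t$. Define $\mathrm{ACE}_N(t)=E\{N_{i1}(t)-N_{i0}(t)\}$ and $\mathrm{ACE}_Y(t)=E\{Y_{i1}(t)-Y_{i0}(t)\}$. *)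

theory Defs
  imports "HOL-Probability.Probability"
begin

text \<open>A simple point process observed on [0,T] is represented by its (finite) set of
event points; its counting function is N(t) = N([0,t]).\<close>
definition counting :: "real set \<Rightarrow> real \<Rightarrow> nat" where
  "counting S t = card (S \<inter> {0..t})"

definition single_point :: "real \<Rightarrow> (real \<Rightarrow> nat) \<Rightarrow> bool" where
  "single_point T N \<longleftrightarrow> N T \<le> 1"

text \<open>Event time of a counting function; None encodes T^+ (no event in [0,T]).\<close>
definition event_time :: "real \<Rightarrow> (real \<Rightarrow> nat) \<Rightarrow> real option" where
  "event_time T N = (if N T = 0 then None else
     Some (THE \<tau>. \<tau> \<in> {0..T} \<and> (\<forall>t\<in>{0..T}. (\<tau> \<le> t \<longrightarrow> N t = 1) \<and> (t < \<tau> \<longrightarrow> N t = 0))))"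

fun etime_le :: "real option \<Rightarrow> real \<Rightarrow> bool" where
  "etime_le None \<tau> = False"
| "etime_le (Some s) \<tau> = (s \<le> \<tau>)"

fun etime_leq :: "real option \<Rightarrow> real option \<Rightarrow> bool" where
  "etime_leq _ None = True"
| "etime_leq None (Some _) = False"
| "etime_leq (Some a) (Some b) = (a \<le> b)"

fun time_le_etime :: "real \<Rightarrow> real option \<Rightarrow> bool" where
  "time_le_etime t None = True"
| "time_le_etime t (Some s) = (t \<le> s)"

text \<open>Potential event time T_{iz}; z = True means z = 1.\<close>
definition pot_time :: "real \<Rightarrow> (bool \<Rightarrow> 'a \<Rightarrow> real set) \<Rightarrow> bool \<Rightarrow> 'a \<Rightarrow> real option" where
  "pot_time T P z \<omega> = event_time T (counting (P z \<omega>))"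

definition ACE_N :: "'a measure \<Rightarrow> (bool \<Rightarrow> 'a \<Rightarrow> real set) \<Rightarrow> real \<Rightarrow> real" where
  "ACE_N M P t = (\<integral>\<omega>. real (counting (P True \<omega>) t) - real (counting (P False \<omega>) t) \<partial>M)"

definition ACE_Y :: "'a measure \<Rightarrow> real \<Rightarrow> (bool \<Rightarrow> 'a \<Rightarrow> real set)
      \<Rightarrow> ('a \<Rightarrow> real option \<Rightarrow> real \<Rightarrow> real) \<Rightarrow> real \<Rightarrow> real" where
  "ACE_Y M T P Y t = (\<integral>\<omega>. Y \<omega> (pot_time T P True \<omega>) t - Y \<omega> (pot_time T P False \<omega>) t \<partial>M)"

definition cond_exp_event :: "'a measure \<Rightarrow> ('a \<Rightarrow> real) \<Rightarrow> 'a set \<Rightarrow> real" where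
  "cond_exp_event M X A = (\<integral>\<omega>. X \<omega> * indicator A \<omega> \<partial>M) / measure M A"

definition between_event :: "'a measure \<Rightarrow> real \<Rightarrow> (bool \<Rightarrow> 'a \<Rightarrow> real set) \<Rightarrow> bool \<Rightarrow> bool \<Rightarrow> real \<Rightarrow> 'a set" where
  "between_event M T P a b \<tau> = {\<omega> \<in> space M. etime_le (pot_time T P a \<omega>) \<tau> \<and> \<not> etime_le (pot_time T P b \<omega>) \<tau>}"

definition potential_sigma :: "'a measure \<Rightarrow> (bool \<Rightarrow> 'a \<Rightarrow> real set)
      \<Rightarrow> ('a \<Rightarrow> real option \<Rightarrow> real \<Rightarrow> real) \<Rightarrow> 'a set set" where
  "potential_sigma M P Y = sigma_sets (space M)
     ({{\<omega> \<in> space M. counting (P z \<omega>) t = k} | z t k. True}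
      \<union> {{\<omega> \<in> space M. Y \<omega> \<tau> t \<le> c} | \<tau> t c. True})"

end

theory Submission
  imports Defs
begin

lemma counting_empty[simp]: "counting {} x = 0" by (simp add: counting_def)
lemma counting_single: "0 \<le> s \<Longrightarrow> counting {s} x = (if s \<le> x then 1 else 0)"
  by (auto simp: counting_def Int_insert_left)

lemma single_struct:
  assumes "finite S" "S \<subseteq> {0..T}" "counting S T \<le> 1"
  shows "(S = {} \<and> event_time T (counting S) = None) \<or>
         (\<exists>s. 0 \<le> s \<and> s \<le> T \<and> S = {s} \<and> event_time T (counting S) = Some s)"
proof -
  have "counting S T = card S" using assms(2) unfolding counting_def
    by (metis inf.absorb1)
  with assms have c: "card S \<le> 1" by simp
  show ?thesis
  proof (cases "card S = 0")
    case True
    then have "S = {}" using assms(1) by simp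
    then show ?thesis by (simp add: event_time_def)
  next
    case False
    then have "card S = 1" using c by simp
    then obtain s where S: "S = {s}" by (metis card_1_singletonE)
    then have s: "0 \<le> s" "s \<le> T" using assms(2) by auto
    have "(THE \<tau>. \<tau> \<in> {0..T} \<and> (\<forall>t\<in>{0..T}. (\<tau> \<le> t \<longrightarrow> counting {s} t = 1) \<and> (t < \<tau> \<longrightarrow> counting {s} t = 0))) = s"
    proof (rule the_equality)
      show "s \<in> {0..T} \<and> (\<forall>t\<in>{0..T}. (s \<le> t \<longrightarrow> counting {s} t = 1) \<and> (t < s \<longrightarrow> counting {s} t = 0))"
        using s by (auto simp: counting_single)
    next
      fix \<tau> assume h: "\<tau> \<in> {0..T} \<and> (\<forall>t\<in>{0..T}. (\<tau> \<le> t \<longrightarrow> counting {s} t = 1) \<and> (t < \<tau> \<longrightarrow> counting {s} t = 0))"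
      show "\<tau> = s"
      proof (rule ccontr)
        assume "\<tau> \<noteq> s"
        then consider "\<tau> < s" | "s < \<tau>" by linarith
        then show False
        proof cases
          case 1 then show False using h s by (auto simp: counting_single)
        next
          case 2 then have "counting {s} s = 0" using h s by auto
          then show False using s by (simp add: counting_single)
        qed
      qed
    qed
    moreover have "counting {s} T \<noteq> 0" using s by (simp add: counting_single)
    ultimately show ?thesis using S s by (simp add: event_time_def)
  qed
qed

lemma etime_le_iff:
  assumes "finite S" "S \<subseteq> {0..T}" "counting S T \<le> 1"
  shows "etime_le (event_time T (counting S)) \<tau> \<longleftrightarrow> counting S \<tau> \<noteq> 0"
    and "counting S \<tau> \<le> 1"
  using single_struct[OF assms] by (auto simp: counting_single split: if_splits)

lemma meas_at_event:
  fixes N :: "'a \<Rightarrow> real \<Rightarrow> nat" and S :: "'a \<Rightarrow> real" and G :: "'a \<Rightarrow> real \<Rightarrow> real"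
  assumes T: "0 \<le> T"
   and S: "\<And>\<omega>. \<omega> \<in> space M \<Longrightarrow> S \<omega> \<in> {0..T}"
   and NS: "\<And>\<omega> x. \<omega> \<in> space M \<Longrightarrow> x < T \<Longrightarrow> (N \<omega> x \<noteq> 0) = (S \<omega> \<le> x)"
   and Nm[measurable]: "\<And>x. (\<lambda>\<omega>. N \<omega> x) \<in> measurable M (count_space UNIV)"
   and Gm[measurable]: "\<And>\<sigma>. (\<lambda>\<omega>. G \<omega> \<sigma>) \<in> borel_measurable M"
   and Gc: "\<And>\<omega>. \<omega> \<in> space M \<Longrightarrow> continuous_on {0..T} (G \<omega>)"
  shows "(\<lambda>\<omega>. G \<omega> (S \<omega>)) \<in> borel_measurable M"
proof -
  define k where "k n \<omega> = (LEAST i::nat. 2^n \<le> i \<or> N \<omega> (T * real i / 2^n) \<noteq> 0)" for n \<omega>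
  define q where "q n \<omega> = T * real (k n \<omega>) / 2^n" for n \<omega>
  have km: "k n \<in> measurable M (count_space UNIV)" for n
    unfolding k_def
  proof (rule measurable_Least)
    fix i show "(\<lambda>\<omega>. 2^n \<le> i \<or> N \<omega> (T * real i / 2^n) \<noteq> 0) \<in> measurable M (count_space UNIV)"
      by (rule measurable_compose[OF Nm, where g="\<lambda>m. 2^n \<le> i \<or> m \<noteq> 0"]) simp
  qed
  have kle: "k n \<omega> \<le> 2^n" for n \<omega>
    unfolding k_def by (rule Least_le) simp
  have kP: "2^n \<le> k n \<omega> \<or> N \<omega> (T * real (k n \<omega>) / 2^n) \<noteq> 0" for n \<omega>
    unfolding k_def by (rule LeastI[of _ "2^n"]) simp
  have knP: "\<not> (2^n \<le> i \<or> N \<omega> (T * real i / 2^n) \<noteq> 0)" if "i < k n \<omega>" for n \<omega> i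
    using not_less_Least[of i] that unfolding k_def by blast
  have qT: "q n \<omega> \<in> {0..T}" for n \<omega>
  proof -
    have "real (k n \<omega>) \<le> 2^n" using kle[of n \<omega>]
      by (metis of_nat_le_iff of_nat_numeral of_nat_power)
    then have "real (k n \<omega>) / 2^n \<le> 1" by simp
    then have "T * (real (k n \<omega>) / 2^n) \<le> T * 1" using T by (intro mult_left_mono) auto
    then show ?thesis using T unfolding q_def by auto
  qed
  have bnd: "S \<omega> \<le> q n \<omega> \<and> q n \<omega> \<le> S \<omega> + T / 2^n" if \<omega>: "\<omega> \<in> space M" for n \<omega>
  proof (cases "T = 0")
    case True then show ?thesis using S[OF \<omega>] by (simp add: q_def)
  next
    case False
    then have Tp: "0 < T" using T by simp
    have lo: "S \<omega> \<le> q n \<omega>"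
    proof (cases "2^n \<le> k n \<omega>")
      case True
      then have "k n \<omega> = 2^n" using kle[of n \<omega>] by simp
      then have "q n \<omega> = T" by (simp add: q_def)
      then show ?thesis using S[OF \<omega>] by simp
    next
      case False
      then have nz: "N \<omega> (q n \<omega>) \<noteq> 0" using kP[of n \<omega>] by (simp add: q_def)
      have "k n \<omega> < 2^n" using False by simp
      then have "real (k n \<omega>) < real (2^n)" by (simp only: of_nat_less_iff)
      then have "real (k n \<omega>) < 2^n" by simp
      then have "real (k n \<omega>) / 2^n < 1" by simp
      then have "T * (real (k n \<omega>) / 2^n) < T * 1" using Tp by (intro mult_strict_left_mono) auto
      then have "q n \<omega> < T" by (simp add: q_def)
      then show ?thesis using NS[OF \<omega>] nz by blast
    qed
    have hi: "q n \<omega> \<le> S \<omega> + T / 2^n"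
    proof (cases "k n \<omega> = 0")
      case True then show ?thesis using S[OF \<omega>] T by (simp add: q_def)
    next
      case False
      then have "k n \<omega> - 1 < k n \<omega>" by simp
      from knP[OF this] have a: "\<not> 2^n \<le> k n \<omega> - 1" and b: "N \<omega> (T * real (k n \<omega> - 1) / 2^n) = 0" by auto
      have "k n \<omega> - 1 < 2^n" using a by simp
      then have "real (k n \<omega> - 1) < real (2^n)" by (simp only: of_nat_less_iff)
      then have "real (k n \<omega> - 1) < 2^n" by simp
      then have "real (k n \<omega> - 1) / 2^n < 1" by simp
      then have "T * (real (k n \<omega> - 1) / 2^n) < T * 1" using Tp by (intro mult_strict_left_mono) auto
      then have "T * real (k n \<omega> - 1) / 2^n < T" by simp
      then have "\<not> S \<omega> \<le> T * real (k n \<omega> - 1) / 2^n" using NS[OF \<omega>] b by blast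
      moreover have "T * real (k n \<omega> - 1) / 2^n = q n \<omega> - T / 2^n"
      proof -
        have "real (k n \<omega> - 1) = real (k n \<omega>) - 1" using False by (simp add: of_nat_diff)
        then show ?thesis by (simp add: q_def diff_divide_distrib right_diff_distrib)
      qed
      ultimately show ?thesis by simp
    qed
    show ?thesis using lo hi by simp
  qed
  have lim: "(\<lambda>n. q n \<omega>) \<longlonglongrightarrow> S \<omega>" if \<omega>: "\<omega> \<in> space M" for \<omega>
  proof -
    have z: "(\<lambda>n. T / 2^n) \<longlonglongrightarrow> 0"
    proof -
      have "(\<lambda>n. T * (1/2)^n) \<longlonglongrightarrow> T * 0"
        by (intro tendsto_mult tendsto_const LIMSEQ_power_zero) simp
      then show ?thesis by (simp add: power_divide)
    qed
    have "(\<lambda>n. q n \<omega> - S \<omega>) \<longlonglongrightarrow> 0"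
    proof (rule Lim_null_comparison[OF _ z])
      have "norm (q n \<omega> - S \<omega>) \<le> T / 2 ^ n" for n
        using bnd[OF \<omega>, of n] by simp
      then show "\<forall>\<^sub>F n in sequentially. norm (q n \<omega> - S \<omega>) \<le> T / 2 ^ n"
        by simp
    qed
    then show ?thesis by (simp add: LIM_zero_iff)
  qed
  show ?thesis
  proof (rule borel_measurable_LIMSEQ_real)
    fix \<omega> assume \<omega>: "\<omega> \<in> space M"
    have "continuous (at (S \<omega>) within {0..T}) (G \<omega>)"
      using Gc[OF \<omega>] S[OF \<omega>] continuous_on_eq_continuous_within by blast
    then show "(\<lambda>n. G \<omega> (q n \<omega>)) \<longlonglongrightarrow> G \<omega> (S \<omega>)"
      by (rule continuous_within_tendsto_compose'[OF _ qT lim[OF \<omega>]])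
  next
    fix n
    have "(\<lambda>\<omega>. (\<lambda>i. G \<omega> (T * real i / 2^n)) (k n \<omega>)) \<in> borel_measurable M"
      by (rule measurable_compose_countable[where f="\<lambda>i \<omega>. G \<omega> (T * real i / 2^n)", OF Gm km])
    then show "(\<lambda>\<omega>. G \<omega> (q n \<omega>)) \<in> borel_measurable M" by (simp add: q_def)
  qed
qed


lemma counting_prod_sets:
  fixes N :: "'a \<Rightarrow> real \<Rightarrow> nat"
  assumes Nm: "\<And>x. (\<lambda>\<omega>. N \<omega> x) \<in> measurable M (count_space UNIV)"
   and str: "\<And>\<omega>. \<omega> \<in> space M \<Longrightarrow> (\<forall>x. N \<omega> x = 0) \<or> (\<exists>s. \<forall>x. N \<omega> x = (if s \<le> x then 1 else 0))"
  shows "Measurable.pred (M \<Otimes>\<^sub>M lborel) (\<lambda>p. N (fst p) (snd p) = 0)"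
proof -
  have m1[measurable]: "(\<lambda>p. N (fst p) x) \<in> measurable (M \<Otimes>\<^sub>M lborel) (count_space UNIV)" for x
    by (rule measurable_compose[OF measurable_fst Nm])
  have "Measurable.pred (M \<Otimes>\<^sub>M lborel) (\<lambda>p. \<exists>r::rat. N (fst p) (real_of_rat r) = 0 \<and> snd p \<le> real_of_rat r)"
    by measurable
  moreover have "N (fst p) (snd p) = 0 \<longleftrightarrow> (\<exists>r::rat. N (fst p) (real_of_rat r) = 0 \<and> snd p \<le> real_of_rat r)"
    if "p \<in> space (M \<Otimes>\<^sub>M lborel)" for p
  proof -
    have \<omega>: "fst p \<in> space M" using that by (auto simp: space_pair_measure)
    show ?thesis
    proof (cases "\<forall>x. N (fst p) x = 0")
      case True
      obtain r :: rat where "snd p < real_of_rat r" "real_of_rat r < snd p + 1"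
        using of_rat_dense[of "snd p" "snd p + 1"] by auto
      then show ?thesis using True by (auto intro: less_imp_le)
    next
      case False
      then obtain s where s: "\<forall>x. N (fst p) x = (if s \<le> x then 1 else 0)" using str[OF \<omega>] by blast
      show ?thesis
      proof
        assume "N (fst p) (snd p) = 0"
        then have "snd p < s" using s by (auto split: if_splits)
        then obtain r :: rat where "snd p < real_of_rat r" "real_of_rat r < s"
          using of_rat_dense by blast
        then show "\<exists>r::rat. N (fst p) (real_of_rat r) = 0 \<and> snd p \<le> real_of_rat r" using s by (intro exI[of _ r]) auto
      next
        assume "\<exists>r::rat. N (fst p) (real_of_rat r) = 0 \<and> snd p \<le> real_of_rat r"
        then obtain r :: rat where "N (fst p) (real_of_rat r) = 0" "snd p \<le> real_of_rat r" by blast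
        then show "N (fst p) (snd p) = 0" using s by (auto split: if_splits)
      qed
    qed
  qed
  ultimately show ?thesis using measurable_cong[where M="M \<Otimes>\<^sub>M lborel"] by (smt (verit))
qed


lemma ftc_interval:
  fixes g g' :: "real \<Rightarrow> real"
  assumes ab: "0 \<le> a" "a \<le> b" "b \<le> T"
   and deriv: "\<And>\<tau>. \<tau> \<in> {0..T} \<Longrightarrow> (g has_real_derivative g' \<tau>) (at \<tau> within {0..T})"
   and int: "integrable lborel (\<lambda>\<tau>. indicator {0..T} \<tau> * g' \<tau>)"
  shows "(\<integral>\<tau>. indicator {a..<b} \<tau> * g' \<tau> \<partial>lborel) = g b - g a"
proof -
  have e1: "indicator {a..b} \<tau> * g' \<tau> = indicator {a..b} \<tau> * (indicator {0..T} \<tau> * g' \<tau>)" for \<tau>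
    using ab by (auto split: split_indicator)
  have e2: "indicator {a..<b} \<tau> * g' \<tau> = indicator {a..<b} \<tau> * (indicator {0..T} \<tau> * g' \<tau>)" for \<tau>
    using ab by (auto split: split_indicator)
  have int2: "integrable lborel (\<lambda>\<tau>. indicator {a..b} \<tau> * g' \<tau>)"
    unfolding e1 using integrable_mult_indicator[OF _ int, of "{a..b}"] by simp
  have int3: "integrable lborel (\<lambda>\<tau>. indicator {a..<b} \<tau> * g' \<tau>)"
    unfolding e2 using integrable_mult_indicator[OF _ int, of "{a..<b}"] by simp
  have "(g' has_integral (g b - g a)) {a..b}"
  proof (rule fundamental_theorem_of_calculus[OF ab(2)])
    fix x assume x: "x \<in> {a..b}"
    then have "x \<in> {0..T}" using ab by auto
    from deriv[OF this] have "(g has_real_derivative g' x) (at x within {a..b})"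
      by (rule DERIV_subset) (use ab in auto)
    then show "(g has_vector_derivative g' x) (at x within {a..b})"
      by (simp add: has_real_derivative_iff_has_vector_derivative)
  qed
  then have "((\<lambda>x. if x \<in> {a..b} then g' x else 0) has_integral (g b - g a)) UNIV"
    by (simp only: has_integral_restrict_UNIV)
  moreover have "(\<lambda>x. if x \<in> {a..b} then g' x else 0) = (\<lambda>\<tau>. indicator {a..b} \<tau> * g' \<tau>)"
    by (auto simp: indicator_def)
  ultimately have h1: "((\<lambda>\<tau>. indicator {a..b} \<tau> * g' \<tau>) has_integral (g b - g a)) UNIV" by simp
  note h2 = has_integral_integral_lborel[OF int2]
  have "(\<integral>\<tau>. indicator {a..b} \<tau> * g' \<tau> \<partial>lborel) = g b - g a"
    using has_integral_unique[OF h2 h1] .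
  moreover have "(\<integral>\<tau>. indicator {a..<b} \<tau> * g' \<tau> \<partial>lborel) = (\<integral>\<tau>. indicator {a..b} \<tau> * g' \<tau> \<partial>lborel)"
  proof (rule integral_cong_AE)
    show "AE x in lborel. indicator {a..<b} x * g' x = indicator {a..b} x * g' x"
      using AE_lborel_singleton[of b] by eventually_elim (auto split: split_indicator)
  qed (use int2 int3 in auto)
  ultimately show ?thesis by simp
qed


lemma omega_identity:
  fixes g g' h1 h2 :: "real \<Rightarrow> real"
  assumes ab: "a \<in> {0..T}" "b \<in> {0..T}"
   and deriv: "\<And>\<tau>. \<tau> \<in> {0..T} \<Longrightarrow> (g has_real_derivative g' \<tau>) (at \<tau> within {0..T})"
   and int: "integrable lborel (\<lambda>\<tau>. indicator {0..T} \<tau> * g' \<tau>)"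
   and h1m: "h1 \<in> borel_measurable lborel" and h2m: "h2 \<in> borel_measurable lborel"
   and h1: "AE \<tau> in lborel. h1 \<tau> = indicator {a..<b} \<tau> * g' \<tau>"
   and h2: "AE \<tau> in lborel. h2 \<tau> = indicator {b..<a} \<tau> * g' \<tau>"
  shows "(\<integral>\<tau>. h1 \<tau> \<partial>lborel) - (\<integral>\<tau>. h2 \<tau> \<partial>lborel) = g b - g a"
proof -
  have gm: "(\<lambda>\<tau>. indicator {c..<d} \<tau> * g' \<tau>) \<in> borel_measurable lborel" if "c \<in> {0..T}" "d \<in> {0..T}" for c d
  proof -
    have "(\<lambda>\<tau>. indicator {c..<d} \<tau> * g' \<tau>) = (\<lambda>\<tau>. indicator {c..<d} \<tau> * (indicator {0..T} \<tau> * g' \<tau>))"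
      using that by (auto split: split_indicator)
    moreover have "(\<lambda>\<tau>. indicator {c..<d} \<tau> * (indicator {0..T} \<tau> * g' \<tau>)) \<in> borel_measurable lborel"
      using borel_measurable_integrable[OF int] by measurable
    ultimately show ?thesis by metis
  qed
  have e1: "(\<integral>\<tau>. h1 \<tau> \<partial>lborel) = (\<integral>\<tau>. indicator {a..<b} \<tau> * g' \<tau> \<partial>lborel)"
    by (rule integral_cong_AE[OF h1m gm[OF ab] h1])
  have e2: "(\<integral>\<tau>. h2 \<tau> \<partial>lborel) = (\<integral>\<tau>. indicator {b..<a} \<tau> * g' \<tau> \<partial>lborel)"
    by (rule integral_cong_AE[OF h2m gm[OF ab(2,1)] h2])
  show ?thesis
  proof (cases "a \<le> b")
    case True
    then have "{b..<a} = {}" by auto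
    then show ?thesis unfolding e1 e2 using ftc_interval[of a b T g g', OF _ True _ deriv int] ab by simp
  next
    case False
    then have "{a..<b} = {}" by auto
    then show ?thesis unfolding e1 e2 using ftc_interval[of b a T g g', OF _ _ _ deriv int] ab False by simp
  qed
qed

theorem theorem1:
  fixes M :: "'a measure" and T :: real
    and Z :: "'a \<Rightarrow> bool"
    and P :: "bool \<Rightarrow> 'a \<Rightarrow> real set"
    and Y :: "'a \<Rightarrow> real option \<Rightarrow> real \<Rightarrow> real"
    and dY :: "'a \<Rightarrow> real \<Rightarrow> real \<Rightarrow> real"
  assumes prob: "prob_space M"
    and Z_meas: "Z \<in> measurable M (count_space UNIV)"
    and P_fin: "\<And>z \<omega>. \<omega> \<in> space M \<Longrightarrow> finite (P z \<omega>) \<and> P z \<omega> \<subseteq> {0..T}"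
    and N_meas: "\<And>z t. (\<lambda>\<omega>. counting (P z \<omega>) t) \<in> measurable M (count_space UNIV)"
    and Y_meas: "\<And>\<tau> t. (\<lambda>\<omega>. Y \<omega> \<tau> t) \<in> borel_measurable M"
    and single: "\<And>z \<omega>. \<omega> \<in> space M \<Longrightarrow> single_point T (counting (P z \<omega>))"
    and randomization: "prob_space.indep_set M
          {{\<omega> \<in> space M. Z \<omega> = z} | z. True} (potential_sigma M P Y)"
    and no_anticipation: "\<And>\<omega> t \<tau> \<tau>'. \<omega> \<in> space M \<Longrightarrow> t \<in> {0..T} \<Longrightarrow>
          time_le_etime t \<tau> \<Longrightarrow> time_le_etime t \<tau>' \<Longrightarrow> Y \<omega> \<tau> t = Y \<omega> \<tau>' t"
    and deriv: "\<And>\<omega> t \<tau>. \<omega> \<in> space M \<Longrightarrow> t \<in> {0..T} \<Longrightarrow> \<tau> \<in> {0..T} \<Longrightarrow>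
          ((\<lambda>s. Y \<omega> (Some s) t) has_real_derivative dY \<omega> \<tau> t) (at \<tau> within {0..T})"
    and deriv_int: "\<And>t. t \<in> {0..T} \<Longrightarrow>
          integrable (M \<Otimes>\<^sub>M lborel) (\<lambda>(\<omega>, \<tau>). indicator {0..T} \<tau> * dY \<omega> \<tau> t)"
  shows "(\<forall>t\<in>{0..T}. ACE_Y M T P Y t =
            (LINT \<tau>:{0..T}|lborel. cond_exp_event M (\<lambda>\<omega>. dY \<omega> \<tau> t) (between_event M T P False True \<tau>)
                                   * measure M (between_event M T P False True \<tau>))
          - (LINT \<tau>:{0..T}|lborel. cond_exp_event M (\<lambda>\<omega>. dY \<omega> \<tau> t) (between_event M T P True False \<tau>)
                                   * measure M (between_event M T P True False \<tau>)))
       \<and> ((\<forall>\<omega>\<in>space M. etime_leq (pot_time T P True \<omega>) (pot_time T P False \<omega>)) \<longrightarrow>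
          (\<forall>t\<in>{0..T}. ACE_Y M T P Y t =
            - (LINT \<tau>:{0..T}|lborel. cond_exp_event M (\<lambda>\<omega>. dY \<omega> \<tau> t) (between_event M T P True False \<tau>)
                                     * ACE_N M P \<tau>)))"
proof (cases "0 \<le> T")
  case False
  then show ?thesis by auto
next
  case T0: True
  interpret prob_space M by (rule prob)
  interpret PS: pair_sigma_finite M lborel
    by (intro pair_sigma_finite.intro sigma_finite_measure_axioms lborel.sigma_finite_measure_axioms)
  define N where "N z \<omega> x = counting (P z \<omega>) x" for z \<omega> x
  define Sz where "Sz z \<omega> = (case pot_time T P z \<omega> of None \<Rightarrow> T | Some s \<Rightarrow> s)" for z \<omega>
  have c1: "counting (P z \<omega>) T \<le> 1" if "\<omega> \<in> space M" for z \<omega>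
    using single[OF that] by (simp add: single_point_def)
  have struct: "(P z \<omega> = {} \<and> pot_time T P z \<omega> = None) \<or>
      (\<exists>s. 0 \<le> s \<and> s \<le> T \<and> P z \<omega> = {s} \<and> pot_time T P z \<omega> = Some s)" if "\<omega> \<in> space M" for z \<omega>
    using single_struct[of "P z \<omega>" T] P_fin[OF that] c1[OF that] by (simp add: pot_time_def)
  have le_iff: "etime_le (pot_time T P z \<omega>) \<tau> \<longleftrightarrow> N z \<omega> \<tau> \<noteq> 0" if "\<omega> \<in> space M" for z \<omega> \<tau>
    using etime_le_iff(1)[of "P z \<omega>" T \<tau>] P_fin[OF that] c1[OF that] by (simp add: pot_time_def N_def)
  have Nle1: "N z \<omega> \<tau> \<le> 1" if "\<omega> \<in> space M" for z \<omega> \<tau>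
    using etime_le_iff(2)[of "P z \<omega>" T \<tau>] P_fin[OF that] c1[OF that] by (simp add: N_def)
  have Nstr: "(\<forall>x. N z \<omega> x = 0) \<or> (\<exists>s. \<forall>x. N z \<omega> x = (if s \<le> x then 1 else 0))" if "\<omega> \<in> space M" for z \<omega>
    using struct[OF that, of z] by (auto simp: N_def counting_single)
  have Sz_in: "Sz z \<omega> \<in> {0..T}" if "\<omega> \<in> space M" for z \<omega>
    using struct[OF that, of z] T0 by (auto simp: Sz_def)
  have NS: "(N z \<omega> x \<noteq> 0) = (Sz z \<omega> \<le> x)" if "\<omega> \<in> space M" "x < T" for z \<omega> x
    using struct[OF that(1), of z] that(2) by (auto simp: Sz_def N_def counting_single split: if_splits)
  have Nm: "(\<lambda>\<omega>. N z \<omega> x) \<in> measurable M (count_space UNIV)" for z x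
    unfolding N_def by (rule N_meas)
  have Nprod: "Measurable.pred (M \<Otimes>\<^sub>M lborel) (\<lambda>p. N z (fst p) (snd p) = 0)" for z
    by (rule counting_prod_sets[OF Nm Nstr])
  have B_iff: "\<omega> \<in> between_event M T P a b \<tau> \<longleftrightarrow> \<omega> \<in> space M \<and> N a \<omega> \<tau> \<noteq> 0 \<and> N b \<omega> \<tau> = 0" for a b \<tau> \<omega>
    unfolding between_event_def using le_iff by auto
  have B_sets: "between_event M T P a b \<tau> \<in> sets M" for a b \<tau>
  proof -
    have "between_event M T P a b \<tau> = {\<omega> \<in> space M. N a \<omega> \<tau> \<noteq> 0 \<and> N b \<omega> \<tau> = 0}" using B_iff by auto
    also have "\<dots> \<in> sets M" using Nm[of a \<tau>] Nm[of b \<tau>] by measurable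
    finally show ?thesis .
  qed
  have Bprod: "(\<lambda>p. indicator (between_event M T P a b (snd p)) (fst p) :: real) \<in> borel_measurable (M \<Otimes>\<^sub>M lborel)" for a b
  proof -
    have m: "(\<lambda>p. if N a (fst p) (snd p) = 0 then 0 else if N b (fst p) (snd p) = 0 then 1 else 0 :: real) \<in> borel_measurable (M \<Otimes>\<^sub>M lborel)"
      using Nprod[of a] Nprod[of b] by (intro measurable_If measurable_const) (auto simp: pred_def)
    have eq: "\<And>p. p \<in> space (M \<Otimes>\<^sub>M lborel) \<Longrightarrow> (indicator (between_event M T P a b (snd p)) (fst p) :: real) =
       (if N a (fst p) (snd p) = 0 then 0 else if N b (fst p) (snd p) = 0 then 1 else 0)"
      by (auto simp: space_pair_measure B_iff indicator_def)
    show ?thesis by (subst measurable_cong[OF eq]) (auto intro: m)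
  qed
  have part1: "ACE_Y M T P Y t =
            (LINT \<tau>:{0..T}|lborel. cond_exp_event M (\<lambda>\<omega>. dY \<omega> \<tau> t) (between_event M T P False True \<tau>)
                                   * measure M (between_event M T P False True \<tau>))
          - (LINT \<tau>:{0..T}|lborel. cond_exp_event M (\<lambda>\<omega>. dY \<omega> \<tau> t) (between_event M T P True False \<tau>)
                                   * measure M (between_event M T P True False \<tau>))" if t: "t \<in> {0..T}" for t
  proof -
    define f where "f = (\<lambda>\<omega> \<tau>. indicator {0..T} \<tau> * dY \<omega> \<tau> t)"
    have fint: "integrable (M \<Otimes>\<^sub>M lborel) (case_prod f)" using deriv_int[OF t] by (simp add: f_def)
    define h where "h a b = (\<lambda>\<omega> \<tau>. f \<omega> \<tau> * indicator (between_event M T P a b \<tau>) \<omega>)" for a b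
    have hm: "case_prod (h a b) \<in> borel_measurable (M \<Otimes>\<^sub>M lborel)" for a b
    proof -
      have "(\<lambda>p. case_prod f p * indicator (between_event M T P a b (snd p)) (fst p)) \<in> borel_measurable (M \<Otimes>\<^sub>M lborel)"
        using borel_measurable_integrable[OF fint] Bprod[of a b] by (rule borel_measurable_times)
      moreover have "(\<lambda>p. case_prod f p * indicator (between_event M T P a b (snd p)) (fst p)) = case_prod (h a b)"
        by (auto simp: h_def)
      ultimately show ?thesis by simp
    qed
    have hint: "integrable (M \<Otimes>\<^sub>M lborel) (case_prod (h a b))" for a b
      by (rule Bochner_Integration.integrable_bound[OF fint hm]) (auto simp: h_def indicator_def split: prod.splits)
    have inner: "(\<integral>\<omega>. h a b \<omega> \<tau> \<partial>M) = indicator {0..T} \<tau> * (cond_exp_event M (\<lambda>\<omega>. dY \<omega> \<tau> t) (between_event M T P a b \<tau>)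
                                   * measure M (between_event M T P a b \<tau>))" for a b \<tau>
    proof (cases "\<tau> \<in> {0..T}")
      case False then show ?thesis by (simp add: h_def f_def)
    next
      case True
      let ?B = "between_event M T P a b \<tau>"
      have "(\<integral>\<omega>. h a b \<omega> \<tau> \<partial>M) = (\<integral>\<omega>. dY \<omega> \<tau> t * indicator ?B \<omega> \<partial>M)" using True by (simp add: h_def f_def)
      moreover have "(\<integral>\<omega>. dY \<omega> \<tau> t * indicator ?B \<omega> \<partial>M) = cond_exp_event M (\<lambda>\<omega>. dY \<omega> \<tau> t) ?B * measure M ?B"
      proof (cases "measure M ?B = 0")
        case True
        have "?B \<in> null_sets M" using True B_sets by (simp add: null_sets_def emeasure_eq_measure)
        then have "AE \<omega> in M. \<omega> \<notin> ?B" by (rule AE_not_in)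
        then have "(\<integral>\<omega>. dY \<omega> \<tau> t * indicator ?B \<omega> \<partial>M) = 0"
          by (intro integral_eq_zero_AE) (auto elim!: eventually_mono)
        then show ?thesis using True by simp
      next
        case False then show ?thesis by (simp add: cond_exp_event_def)
      qed
      ultimately show ?thesis using True by simp
    qed
    have lint: "(LINT \<tau>:{0..T}|lborel. cond_exp_event M (\<lambda>\<omega>. dY \<omega> \<tau> t) (between_event M T P a b \<tau>)
                                   * measure M (between_event M T P a b \<tau>)) = (\<integral>\<omega>. (\<integral>\<tau>. h a b \<omega> \<tau> \<partial>lborel) \<partial>M)" for a b
    proof -
      have "(LINT \<tau>:{0..T}|lborel. cond_exp_event M (\<lambda>\<omega>. dY \<omega> \<tau> t) (between_event M T P a b \<tau>)
                                   * measure M (between_event M T P a b \<tau>)) = (\<integral>\<tau>. (\<integral>\<omega>. h a b \<omega> \<tau> \<partial>M) \<partial>lborel)"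
        by (simp add: set_lebesgue_integral_def inner)
      also have "\<dots> = (\<integral>\<omega>. (\<integral>\<tau>. h a b \<omega> \<tau> \<partial>lborel) \<partial>M)"
        by (rule PS.Fubini_integral[OF hint])
      finally show ?thesis .
    qed
    have ifst: "integrable M (\<lambda>\<omega>. \<integral>\<tau>. h a b \<omega> \<tau> \<partial>lborel)" for a b
      using PS.integrable_fst'[OF hint[of a b]] by simp
    have Yeq: "Y \<omega> (pot_time T P z \<omega>) t = Y \<omega> (Some (Sz z \<omega>)) t" if \<omega>: "\<omega> \<in> space M" for z \<omega>
    proof (cases "pot_time T P z \<omega>")
      case None
      then show ?thesis using no_anticipation[OF \<omega> t, of None "Some T"] t by (simp add: Sz_def)
    next
      case (Some s) then show ?thesis by (simp add: Sz_def)
    qed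
    have Gc: "continuous_on {0..T} (\<lambda>\<sigma>. Y \<omega> (Some \<sigma>) t)" if \<omega>: "\<omega> \<in> space M" for \<omega>
      using deriv[OF \<omega> t] DERIV_continuous continuous_on_eq_continuous_within by blast
    have Ym: "(\<lambda>\<omega>. Y \<omega> (pot_time T P z \<omega>) t) \<in> borel_measurable M" for z
    proof -
      have "(\<lambda>\<omega>. Y \<omega> (Some (Sz z \<omega>)) t) \<in> borel_measurable M"
        by (rule meas_at_event[of T M "Sz z" "N z" "\<lambda>\<omega> \<sigma>. Y \<omega> (Some \<sigma>) t", OF T0 Sz_in NS Nm Y_meas Gc])
      then show ?thesis by (subst measurable_cong[OF Yeq]) auto
    qed
    have AEeq: "AE \<omega> in M. Y \<omega> (pot_time T P True \<omega>) t - Y \<omega> (pot_time T P False \<omega>) t =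
        (\<integral>\<tau>. h False True \<omega> \<tau> \<partial>lborel) - (\<integral>\<tau>. h True False \<omega> \<tau> \<partial>lborel)"
      using PS.AE_integrable_fst[OF fint] AE_space
    proof eventually_elim
      case (elim \<omega>)
      then have \<omega>: "\<omega> \<in> space M" and fi: "integrable lborel (f \<omega>)" by auto
      have hAE: "AE \<tau> in lborel. h a b \<omega> \<tau> = indicator {Sz a \<omega>..<Sz b \<omega>} \<tau> * dY \<omega> \<tau> t" for a b
        using AE_lborel_singleton[of T]
      proof eventually_elim
        case (elim \<tau>)
        show ?case
        proof (cases "\<tau> \<in> {0..<T}")
          case True
          then have "\<tau> < T" by simp
          then have e: "N a \<omega> \<tau> \<noteq> 0 \<longleftrightarrow> Sz a \<omega> \<le> \<tau>" "N b \<omega> \<tau> \<noteq> 0 \<longleftrightarrow> Sz b \<omega> \<le> \<tau>"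
            using NS \<omega> by blast+
          have "(\<omega> \<in> between_event M T P a b \<tau>) \<longleftrightarrow> \<tau> \<in> {Sz a \<omega>..<Sz b \<omega>}"
            using e \<omega> B_iff by auto
          then show ?thesis using True
            by (auto simp: h_def f_def indicator_def)
        next
          case False
          then have "\<tau> \<notin> {0..T}" using elim by auto
          moreover have "\<tau> \<notin> {Sz a \<omega>..<Sz b \<omega>}" using Sz_in[OF \<omega>, of a] Sz_in[OF \<omega>, of b] False by auto
          ultimately show ?thesis by (simp add: h_def f_def)
        qed
      qed
      have hm2: "(\<lambda>\<tau>. h a b \<omega> \<tau>) \<in> borel_measurable lborel" for a b
        using measurable_Pair2[OF hm[of a b] \<omega>] by simp
      have "(\<integral>\<tau>. h False True \<omega> \<tau> \<partial>lborel) - (\<integral>\<tau>. h True False \<omega> \<tau> \<partial>lborel) =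
             Y \<omega> (Some (Sz True \<omega>)) t - Y \<omega> (Some (Sz False \<omega>)) t"
        by (rule omega_identity[where g="\<lambda>s. Y \<omega> (Some s) t" and g'="\<lambda>\<tau>. dY \<omega> \<tau> t"
              and ?h1.0="h False True \<omega>" and ?h2.0="h True False \<omega>" and a="Sz False \<omega>" and b="Sz True \<omega>" and T=T,
              OF Sz_in[OF \<omega>] Sz_in[OF \<omega>] deriv[OF \<omega> t]])
           (use fi hm2 hAE in \<open>auto simp: f_def\<close>)
      then show ?case using Yeq[OF \<omega>] by simp
    qed
    have "ACE_Y M T P Y t = (\<integral>\<omega>. Y \<omega> (pot_time T P True \<omega>) t - Y \<omega> (pot_time T P False \<omega>) t \<partial>M)"
      by (simp add: ACE_Y_def)
    also have "\<dots> = (\<integral>\<omega>. (\<integral>\<tau>. h False True \<omega> \<tau> \<partial>lborel) - (\<integral>\<tau>. h True False \<omega> \<tau> \<partial>lborel) \<partial>M)"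
      by (rule integral_cong_AE[OF _ _ AEeq]) (use Ym ifst in auto)
    also have "\<dots> = (\<integral>\<omega>. (\<integral>\<tau>. h False True \<omega> \<tau> \<partial>lborel) \<partial>M) - (\<integral>\<omega>. (\<integral>\<tau>. h True False \<omega> \<tau> \<partial>lborel) \<partial>M)"
      by (rule Bochner_Integration.integral_diff[OF ifst ifst])
    finally show ?thesis by (simp only: lint)
  qed
  have mono_aux: "etime_le a \<tau>" if "etime_leq a b" "etime_le b \<tau>" for a b \<tau>
    using that by (cases a; cases b) auto
  have part2: "ACE_Y M T P Y t =
            - (LINT \<tau>:{0..T}|lborel. cond_exp_event M (\<lambda>\<omega>. dY \<omega> \<tau> t) (between_event M T P True False \<tau>)
                                     * ACE_N M P \<tau>)"
    if mono: "\<forall>\<omega>\<in>space M. etime_leq (pot_time T P True \<omega>) (pot_time T P False \<omega>)" and t: "t \<in> {0..T}" for t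
  proof -
    have emp: "between_event M T P False True \<tau> = {}" for \<tau>
      using mono mono_aux unfolding between_event_def by blast
    have acen: "ACE_N M P \<tau> = measure M (between_event M T P True False \<tau>)" for \<tau>
    proof -
      have "ACE_N M P \<tau> = (\<integral>\<omega>. indicator (between_event M T P True False \<tau>) \<omega> \<partial>M)"
        unfolding ACE_N_def
      proof (rule Bochner_Integration.integral_cong[OF refl])
        fix \<omega> assume \<omega>: "\<omega> \<in> space M"
        have "N False \<omega> \<tau> \<noteq> 0 \<Longrightarrow> N True \<omega> \<tau> \<noteq> 0" using le_iff[OF \<omega>] mono_aux mono \<omega> by metis
        then show "real (counting (P True \<omega>) \<tau>) - real (counting (P False \<omega>) \<tau>) =
            indicator (between_event M T P True False \<tau>) \<omega>"
        proof -
          have n: "N True \<omega> \<tau> \<le> 1" "N False \<omega> \<tau> \<le> 1" using Nle1 \<omega> by blast+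
          have "\<omega> \<in> between_event M T P True False \<tau> \<longleftrightarrow> N True \<omega> \<tau> \<noteq> 0 \<and> N False \<omega> \<tau> = 0"
            using B_iff \<omega> by blast
          then show ?thesis using n \<open>N False \<omega> \<tau> \<noteq> 0 \<Longrightarrow> N True \<omega> \<tau> \<noteq> 0\<close>
            unfolding N_def indicator_def by (auto; metis neq0_conv)
        qed
      qed
      also have "\<dots> = measure M (between_event M T P True False \<tau>)"
        using sets.sets_into_space[OF B_sets[of True False \<tau>]] by (simp add: Int_absorb2)
      finally show ?thesis .
    qed
    show ?thesis using part1[OF t] by (simp add: emp acen set_lebesgue_integral_def)
  qed
  show ?thesis using part1 part2 by blast
qed

end
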